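(* Let $m,a,b,t\in\mathbb{N}$ with $m\geq 3$, $a\geq 1$, $t\in\{2,\ldots,m-1\}$ and $(t-1)(am+1)<bm+t<t(am+1)$, and let $S=\langle m,\ am+1,\ bm+t\rangle$. If $\mathrm{Ap}(S,m)=\{w(0),w(1),\ldots,w(m-1)\}$, where $w(i)$ is the least element of $S$ congruent to $i$ modulo $m$, then \[ w(i)=\Big\lfloor \frac{i}{t}\Big\rfloor (bm+t)+(i\bmod t)(am+1)\quad\text{for all } i\in\{0,1,\ldots,m-1\}. \]
   Context: $\mathbb{N}=\{0,1,2,\ldots\}$. $\langle A\rangle$ denotes the submonoid of $(\mathbb{N},+)$ generated by $A$ (here $S$ is a numerical semigroup, i.e. has finite complement in $\mathbb{N}$). For $n\in S\setminus\{0\}$, $\mathrm{Ap}(S,n)=\{s\in S: s-n\notin S\}$. $\lfloor x\rfloor$ is the floor and $a\bmod b$ the remainder of the division of $a$ by $b$. *)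

theory Defs
  imports Main
begin

inductive_set gen_monoid :: "nat set \<Rightarrow> nat set" for A :: "nat set" where
  zero: "0 \<in> gen_monoid A"
| add: "x \<in> A \<Longrightarrow> y \<in> gen_monoid A \<Longrightarrow> x + y \<in> gen_monoid A"

definition apery :: "nat set \<Rightarrow> nat \<Rightarrow> nat set" where
  "apery S n = {s \<in> S. s < n \<or> s - n \<notin> S}"

definition apw :: "nat set \<Rightarrow> nat \<Rightarrow> nat \<Rightarrow> nat" where
  "apw S m i = (LEAST s. s \<in> S \<and> s mod m = i mod m)"

end

theory Submission
  imports Defs
begin

lemma gm_form:
  assumes "s \<in> gen_monoid {m, A, B}"
  shows "\<exists>x y z. s = x*m + y*A + z*B"
  using assms
proof (induction rule: gen_monoid.induct)
  case zero
  then show ?case by (rule exI[of _ 0], rule exI[of _ 0], rule exI[of _ 0]) simp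
next
  case (add u v)
  then obtain x y z where v: "v = x*m + y*A + z*B" by blast
  from add.hyps(1) consider "u = m" | "u = A" | "u = B" by blast
  then show ?case
  proof cases
    case 1 then show ?thesis using v by (intro exI[of _ "Suc x"] exI[of _ y] exI[of _ z]) simp
  next
    case 2 then show ?thesis using v by (intro exI[of _ x] exI[of _ "Suc y"] exI[of _ z]) simp
  next
    case 3 then show ?thesis using v by (intro exI[of _ x] exI[of _ y] exI[of _ "Suc z"]) simp
  qed
qed

lemma gm_mult:
  assumes "g \<in> G" shows "k * g \<in> gen_monoid G"
proof (induction k)
  case 0 then show ?case by (simp add: gen_monoid.zero)
next
  case (Suc k)
  then have "g + k * g \<in> gen_monoid G" using assms by (rule gen_monoid.add[rotated])
  then show ?case by simp
qed

lemma gm_add: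
  assumes "u \<in> gen_monoid G" "v \<in> gen_monoid G" shows "u + v \<in> gen_monoid G"
  using assms
proof (induction rule: gen_monoid.induct)
  case zero then show ?case by simp
next
  case (add x y)
  then show ?case using gen_monoid.add[of x G "y + v"] by (simp add: add.assoc)
qed

lemma f_step:
  fixes t A B :: nat
  assumes "t \<ge> 1" "(t - 1) * A < B" "A > 0"
  shows "(n div t) * B + (n mod t) * A \<le> (Suc n div t) * B + (Suc n mod t) * A"
proof -
  define q r where "q = n div t" and "r = n mod t"
  have n: "n = q * t + r" and rt: "r < t" using assms(1) by (auto simp: q_def r_def)
  show ?thesis
  proof (cases "r + 1 < t")
    case True
    define k where "k = r + 1"
    have e: "Suc n = k + q * t" using n by (simp add: k_def)
    have kt: "k < t" using True by (simp add: k_def)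
    have "(k + q * t) div t = q" "(k + q * t) mod t = k" using kt by simp_all
    then have "(k + q * t) div t = q" "(k + q * t) mod t = r + 1" by (simp_all add: k_def)
    then have "Suc n div t = q" "Suc n mod t = r + 1" unfolding e by simp_all
    then show ?thesis by (simp add: q_def[symmetric] r_def[symmetric])
  next
    case False
    then have r: "r = t - 1" using rt by simp
    have "Suc n = (q+1) * t" using n r assms(1) by simp
    then have "Suc n div t = q + 1" "Suc n mod t = 0" using assms(1) by simp_all
    then show ?thesis using r assms(2) by (simp add: q_def[symmetric] r_def[symmetric])
  qed
qed

lemma f_mono:
  fixes t A B :: nat
  assumes "t \<ge> 1" "(t - 1) * A < B" "A > 0" "i \<le> j"
  shows "(i div t) * B + (i mod t) * A \<le> (j div t) * B + (j mod t) * A"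
proof -
  have "mono (\<lambda>n. (n div t) * B + (n mod t) * A)"
    by (rule mono_iff_le_Suc[THEN iffD2]) (use f_step[OF assms(1-3)] in blast)
  then show ?thesis using assms(4) by (simp add: mono_def)
qed

lemma reduce:
  fixes t A B :: nat
  assumes "t \<ge> 1" "B \<le> t * A"
  shows "((y + z*t) div t) * B + ((y + z*t) mod t) * A \<le> y*A + z*B"
  using assms
proof (induction y arbitrary: z rule: less_induct)
  case (less y)
  show ?case
  proof (cases "y < t")
    case True
    then have "(y + z*t) div t = z" "(y + z*t) mod t = y" by simp_all
    then show ?thesis by simp
  next
    case False
    have e: "y + z*t = (y - t) + (z+1)*t" using False by simp
    have "((y + z*t) div t) * B + ((y + z*t) mod t) * A \<le> (y - t)*A + (z+1)*B"
      unfolding e using less.IH[of "y - t" "z+1"] less.prems False by simp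
    also have "\<dots> \<le> y*A + z*B"
    proof -
      have "y*A = (y-t)*A + t*A" using False by (simp add: add_mult_distrib[symmetric])
      then show ?thesis using less.prems by simp
    qed
    finally show ?thesis .
  qed
qed

theorem proposition3p6:
  fixes m a b t :: nat and S :: "nat set"
  assumes "m \<ge> 3" and "a \<ge> 1" and "2 \<le> t" and "t \<le> m - 1"
    and "(t - 1) * (a * m + 1) < b * m + t" and "b * m + t < t * (a * m + 1)"
    and "S = gen_monoid {m, a * m + 1, b * m + t}"
    and "apery S m = apw S m ` {0..<m}"
  shows "\<forall>i \<in> {0..<m}. apw S m i = (i div t) * (b * m + t) + (i mod t) * (a * m + 1)"
proof
  fix i assume i: "i \<in> {0..<m}"
  define A where "A = a * m + 1"
  define B where "B = b * m + t"
  define f where "f n = (n div t) * B + (n mod t) * A" for n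
  have t1: "t \<ge> 1" using assms by simp
  have h1: "(t - 1) * A < B" "A > 0" "B \<le> t * A" using assms(5,6) by (auto simp: A_def B_def)
  have S: "S = gen_monoid {m, A, B}" using assms(7) by (simp add: A_def B_def)
  have modA: "(x*m + y*A + z*B) mod m = (y + z*t) mod m" for x y z
  proof -
    have "x*m + y*A + z*B = (y + z*t) + m * (x + y*a + z*b)"
      by (simp add: A_def B_def algebra_simps)
    then show ?thesis by simp
  qed
  have mem: "f i \<in> S"
  proof -
    have "(i div t) * B \<in> S" "(i mod t) * A \<in> S" unfolding S by (auto intro: gm_mult)
    then show ?thesis unfolding f_def S by (rule gm_add)
  qed
  have fmod: "f i mod m = i mod m"
    using modA[of 0 "i mod t" "i div t"] by (simp add: f_def add.commute mult.commute)
  have low: "f i \<le> s" if sS: "s \<in> S \<and> s mod m = i mod m" for s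
  proof -
    obtain x y z where s: "s = x*m + y*A + z*B" using gm_form[of s m A B] sS S by blast
    have "(y + z*t) mod m = i" using sS s modA i by simp
    then have "i \<le> y + z*t" using mod_less_eq_dividend by metis
    then have "f i \<le> f (y + z*t)" unfolding f_def using f_mono[OF t1 h1(1,2)] by blast
    also have "\<dots> \<le> y*A + z*B" unfolding f_def using reduce[OF t1 h1(3)] by blast
    finally show ?thesis using s by simp
  qed
  have "apw S m i = f i"
    unfolding apw_def by (rule Least_equality) (use mem fmod low in auto)
  then show "apw S m i = (i div t) * (b * m + t) + (i mod t) * (a * m + 1)"
    by (simp add: f_def A_def B_def)
qed

end
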